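(* Let $V$ be a finite set. Let $\mathcal{Q}:=\{\hat X\in\mathbb{S}^{\{0\}\cup V}_+ : \hat X_{00}=1,\ \hat X_{ii}=\hat X_{0i}\ \forall i\in V\}$, $\mathcal{Q}':=\{\hat X\in\mathcal{Q} : \hat X[V]\ge 0 \text{ entrywise}\}$, and $\mathcal{Q}'':=\{\hat X\in\mathcal{Q} : (e_0-e_i)^{\mathsf T}\hat X(e_0-e_j)\ge 0\ \forall ij\in\binom{V}{2}\}$. Let $\hat{\mathcal{C}}\in\{\mathcal{Q},\mathcal{Q}',\mathcal{Q}''\}$. Then a point $\hat X$ of $\hat{\mathcal{C}}$ is a vertex of $\hat{\mathcal{C}}$ if and only if $\operatorname{rank}(\hat X)=1$. Thus the vertices of $\hat{\mathcal{C}}$ are precisely the matrices $(1\oplus\chi^S)(1\oplus\chi^S)^{\mathsf T}$ with $S\subseteq V$.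
   Context: $0$ is a new index not in $V$; $\mathbb{S}^{W}_+$ denotes real symmetric positive semidefinite matrices indexed by $W$, with trace inner product; $e_i$ are standard basis vectors of $\mathbb{R}^{\{0\}\cup V}$; $\hat X[V]$ is the principal submatrix indexed by $V$. $\chi^S$ is the incidence vector of $S$ and $1\oplus\chi^S\in\mathbb{R}^{\{0\}\cup V}$ has $0$-entry $1$. For a convex set $\mathcal{C}$ in a finite-dimensional space $\mathbb{E}$ and $\bar x\in\mathcal{C}$, the normal cone is $N_{\mathcal{C}}(\bar x):=\{c : \langle c,x\rangle\le\langle c,\bar x\rangle\ \forall x\in\mathcal{C}\}$; $\bar x$ is a vertex if $\dim N_{\mathcal{C}}(\bar x)=\dim\mathbb{E}$. *)

theory Defs
  imports "HOL-Analysis.Analysis"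
begin

text \<open>Matrices indexed by the finite type 'n = {0} \<union> V, where the distinguished
  index z plays the role of 0 and V = UNIV - {z}.\<close>

definition sym_mats :: "(real^'n^'n) set" where
  "sym_mats = {X. transpose X = X}"

definition psd :: "real^'n^'n \<Rightarrow> bool" where
  "psd X \<longleftrightarrow> transpose X = X \<and> (\<forall>x. 0 \<le> x \<bullet> (X *v x))"

definition QQ :: "'n \<Rightarrow> (real^'n^'n) set" where
  "QQ z = {X. psd X \<and> X $ z $ z = 1 \<and> (\<forall>i. i \<noteq> z \<longrightarrow> X $ i $ i = X $ z $ i)}"

definition QQ' :: "'n \<Rightarrow> (real^'n^'n) set" where
  "QQ' z = {X \<in> QQ z. \<forall>i j. i \<noteq> z \<longrightarrow> j \<noteq> z \<longrightarrow> 0 \<le> X $ i $ j}"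

definition QQ'' :: "'n \<Rightarrow> (real^'n^'n) set" where
  "QQ'' z = {X \<in> QQ z. \<forall>i j. i \<noteq> z \<longrightarrow> j \<noteq> z \<longrightarrow> i \<noteq> j \<longrightarrow>
       0 \<le> (axis z 1 - axis i 1) \<bullet> (X *v (axis z 1 - axis j 1))}"

text \<open>Normal cone of C at x inside the ambient space E (trace inner product =
  Frobenius inner product on real^'n^'n).\<close>
definition normal_cone :: "'a::real_inner set \<Rightarrow> 'a set \<Rightarrow> 'a \<Rightarrow> 'a set" where
  "normal_cone E C x = {c \<in> E. \<forall>y\<in>C. c \<bullet> y \<le> c \<bullet> x}"

definition is_vertex :: "'a::euclidean_space set \<Rightarrow> 'a set \<Rightarrow> 'a \<Rightarrow> bool" where
  "is_vertex E C x \<longleftrightarrow> x \<in> C \<and> dim (normal_cone E C x) = dim E"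

definition lift_chi :: "'n \<Rightarrow> 'n set \<Rightarrow> real^'n" where
  "lift_chi z S = (\<chi> i. if i = z \<or> i \<in> S then 1 else 0)"

definition outer :: "real^'n \<Rightarrow> real^'n^'n" where
  "outer v = (\<chi> i j. v $ i * v $ j)"

end

theory Submission
  imports Defs
begin


lemma inner_mat: "(A::real^'n^'n) \<bullet> B = (\<Sum>i\<in>UNIV. \<Sum>j\<in>UNIV. A$i$j * B$i$j)"
  by (simp add: inner_vec_def)

lemma quad_sum: "(x::real^'n) \<bullet> (A *v y) = (\<Sum>i\<in>UNIV. \<Sum>j\<in>UNIV. x$i * A$i$j * y$j)"
  by (simp add: inner_vec_def matrix_vector_mult_def sum_distrib_left mult.assoc)

lemma entry_axis: "axis i 1 \<bullet> ((A::real^'n^'n) *v axis j 1) = A$i$j"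
  by (simp add: inner_axis' matrix_vector_mult_basis column_def)

lemma sym_entry: "transpose (A::real^'n^'n) = A \<Longrightarrow> A$i$j = A$j$i"
  by (metis transpose_def vec_lambda_beta)

lemma sym_quad: assumes "transpose (A::real^'n^'n) = A" shows "x \<bullet> (A *v y) = y \<bullet> (A *v x)"
proof -
  have e: "\<And>i j. A$i$j = A$j$i" using sym_entry[OF assms] by blast
  show ?thesis
    apply (simp add: quad_sum)
    apply (subst sum.swap)
    by (simp add: e mult.commute mult.left_commute)
qed

lemma inner_transpose: "(x::real^'n) \<bullet> (transpose M *v y) = (M *v x) \<bullet> y"
  apply (simp add: inner_vec_def matrix_vector_mult_def transpose_def sum_distrib_left sum_distrib_right)
  apply (subst sum.swap)
  by (simp add: ac_simps)

lemma cong_quad: "x \<bullet> ((transpose M ** A ** M) *v x) = (M *v x) \<bullet> ((A::real^'n^'n) *v (M *v x))"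
  by (simp only: matrix_vector_mul_assoc[symmetric] inner_transpose)

lemma cong_entry: "(transpose M ** A ** M)$i$k = (M *v axis i 1) \<bullet> ((A::real^'n^'n) *v (M *v axis k 1))"
proof -
  have "(transpose M ** A ** M)$i$k = axis i 1 \<bullet> ((transpose M ** A ** M) *v axis k 1)"
    by (simp add: entry_axis)
  also have "\<dots> = (M *v axis i 1) \<bullet> (A *v (M *v axis k 1))"
    by (simp only: matrix_vector_mul_assoc[symmetric] inner_transpose)
  finally show ?thesis .
qed

lemma psd_cong: "psd A \<Longrightarrow> psd (transpose M ** A ** M)"
  unfolding psd_def
  by (simp add: cong_quad matrix_transpose_mul matrix_mul_assoc)

lemma psd_zero_row:
  assumes "psd (X::real^'n^'n)" "X$j$j = 0" shows "X$j$k = 0"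
proof (rule ccontr)
  assume ne: "X$j$k \<noteq> 0"
  have sym: "transpose X = X" using assms unfolding psd_def by auto
  have xkj: "X$k$j = X$j$k" using sym_entry[OF sym] by blast
  define s where "s = - (X$k$k + 1) / (2 * X$j$k)"
  define x where "x = axis k 1 + s *\<^sub>R axis j (1::real)"
  have "0 \<le> x \<bullet> (X *v x)" using assms unfolding psd_def by auto
  also have "x \<bullet> (X *v x) = X$k$k + s * X$k$j + s * X$j$k + s * s * X$j$j"
    unfolding x_def by (simp add: matrix_vector_right_distrib matrix_vector_mult_scaleR inner_add_left inner_add_right entry_axis distrib_left)
  also have "\<dots> = -1" using ne assms(2) xkj unfolding s_def by (simp add: field_simps)
  finally show False by simp
qed



definition Pz :: "'n \<Rightarrow> real^'n^'n \<Rightarrow> bool" where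
  "Pz z X \<longleftrightarrow> (\<forall>c. (X *v c)$z = 0 \<longrightarrow> X *v c = 0)"

lemma dim_single: "(v::'a::euclidean_space) \<noteq> 0 \<Longrightarrow> dim {v} = 1"
  by simp

lemma col_entry: "(X *v axis j 1)$i = (X::real^'n^'n)$i$j"
  by (simp add: matrix_vector_mult_basis column_def)

lemma rank1_iff:
  fixes X :: "real^'n^'n"
  assumes zz: "X$z$z = 1"
  shows "rank X = 1 \<longleftrightarrow> Pz z X"
proof -
  define v where "v = X *v axis z 1"
  have vz: "v$z = 1" using zz by (simp add: v_def col_entry)
  have v0: "v \<noteq> 0" using vz by auto
  define R where "R = range (\<lambda>x. X *v x)"
  have rk: "rank X = dim R" by (simp add: R_def rank_dim_range)
  have vR: "v \<in> R" by (simp add: R_def v_def)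
  have dv: "dim {v} = 1" using v0 dim_single by blast
  show ?thesis
  proof
    assume r1: "rank X = 1"
    show "Pz z X" unfolding Pz_def
    proof (intro allI impI)
      fix c assume c: "(X *v c)$z = 0"
      have "span {v} = span R"
      proof (rule subspace_dim_equal)
        show "subspace (span {v})" by simp
        show "subspace (span R)" by simp
        show "span {v} \<subseteq> span R" using vR by (simp add: span_mono)
        show "dim (span R) \<le> dim (span {v})" using r1 rk dv by simp
      qed
      moreover have "X *v c \<in> span R" by (simp add: R_def span_base)
      ultimately have "X *v c \<in> span {v}" by simp
      then obtain k where k: "X *v c = k *\<^sub>R v" by (auto simp: span_singleton)
      then have "(X *v c)$z = k" using vz by simp
      then have "k = 0" using c by simp
      then show "X *v c = 0" using k by simp
    qed
  next
    assume P: "Pz z X"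
    have decomp: "X *v c = (X *v c)$z *\<^sub>R v" for c
    proof -
      define c' where "c' = c - (X *v c)$z *\<^sub>R axis z 1"
      have "X *v c' = X *v c - (X *v c)$z *\<^sub>R v"
        by (simp add: c'_def v_def matrix_vector_mult_diff_distrib matrix_vector_mult_scaleR)
      moreover have "(X *v c')$z = 0" using vz by (simp add: calculation)
      then have "X *v c' = 0" using P unfolding Pz_def by blast
      ultimately show ?thesis by simp
    qed
    have "span R = span {v}"
    proof (rule span_eq[THEN iffD2], rule conjI)
      show "R \<subseteq> span {v}"
        unfolding R_def using decomp by (auto simp: span_singleton)
      show "{v} \<subseteq> span R" using vR by (simp add: span_base)
    qed
    then have "dim R = dim {v}" by (rule span_eq_dim)
    then show "rank X = 1" using rk dv by simp
  qed
qed



definition Em :: "'n \<Rightarrow> 'n \<Rightarrow> real^'n^'n" where "Em i j = axis i (axis j 1)"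

lemma Em_entry: "Em i j $ a $ b = (if a = i \<and> b = j then 1 else 0)"
  by (simp add: Em_def axis_def)

lemma Em_inner: "Em i j \<bullet> Y = Y$i$j"
  by (simp add: Em_def inner_axis')

lemma outer_entry: "outer v $ i $ j = v$i * v$j"
  by (simp add: outer_def)

lemma outer_mv: "outer v *v x = (v \<bullet> x) *\<^sub>R v"
  by (simp add: vec_eq_iff matrix_vector_mult_def outer_def inner_vec_def sum_distrib_left sum_distrib_right ac_simps)

lemma outer_inner: "outer w \<bullet> Y = w \<bullet> (Y *v w)"
  by (simp add: inner_mat quad_sum outer_def ac_simps)

lemma outer_sym: "transpose (outer v) = outer v"
  by (simp add: vec_eq_iff transpose_def outer_def mult.commute)

lemma outer_psd: "psd (outer v)"
  unfolding psd_def
proof (intro conjI allI)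
  show "transpose (outer v) = outer v" by (rule outer_sym)
  fix x show "0 \<le> x \<bullet> (outer v *v x)" by (simp add: outer_mv inner_commute[of x v])
qed

lemma lc_z: "lift_chi z S $ z = 1" by (simp add: lift_chi_def)
lemma lc_01: "lift_chi z S $ i = 0 \<or> lift_chi z S $ i = 1" by (simp add: lift_chi_def)
lemma lc_sq: "lift_chi z S $ i * lift_chi z S $ i = lift_chi z S $ i" by (simp add: lift_chi_def)

lemma outer_QQ: "outer (lift_chi z S) \<in> QQ z"
  unfolding QQ_def by (simp add: outer_psd outer_entry lc_z lc_sq)

lemma outer_QQ': "outer (lift_chi z S) \<in> QQ' z"
  unfolding QQ'_def using outer_QQ by (simp add: outer_entry lift_chi_def)

lemma outer_QQ'': "outer (lift_chi z S) \<in> QQ'' z"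
proof -
  have "0 \<le> (axis z 1 - axis i 1) \<bullet> (outer (lift_chi z S) *v (axis z 1 - axis j 1))" for i j
    by (simp add: outer_mv inner_diff_left inner_diff_right inner_axis inner_axis' lift_chi_def)
  then show ?thesis unfolding QQ''_def using outer_QQ by simp
qed

lemma decomp:
  assumes P: "Pz z X" and zz: "(X::real^'n^'n)$z$z = 1"
  shows "X *v c = (X *v c)$z *\<^sub>R (X *v axis z 1)"
proof -
  define v where "v = X *v axis z 1"
  have vz: "v$z = 1" using zz by (simp add: v_def col_entry)
  define c' where "c' = c - (X *v c)$z *\<^sub>R axis z 1"
  have "X *v c' = X *v c - (X *v c)$z *\<^sub>R v"
    by (simp add: c'_def v_def matrix_vector_mult_diff_distrib matrix_vector_mult_scaleR)
  moreover have "(X *v c')$z = 0" using vz by (simp add: calculation)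
  then have "X *v c' = 0" using P unfolding Pz_def by blast
  ultimately show ?thesis by (simp add: v_def)
qed

lemma P_outer:
  assumes X: "X \<in> QQ z" and P: "Pz z X"
  shows "\<exists>S. S \<subseteq> UNIV - {z} \<and> X = outer (lift_chi z S)"
proof -
  have psd: "psd X" and zz: "X$z$z = 1" and dg: "\<And>i. i \<noteq> z \<Longrightarrow> X$i$i = X$z$i"
    using X unfolding QQ_def by auto
  have sym: "\<And>i j. X$i$j = X$j$i" using psd unfolding psd_def using sym_entry by blast
  have ent: "X$i$k = X$z$k * X$z$i" for i k
  proof -
    have "X$i$k = (X *v axis k 1)$i" by (simp add: col_entry)
    also have "\<dots> = (X *v axis k 1)$z * (X *v axis z 1)$i"
      by (subst decomp[OF P zz, of "axis k 1"]) simp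
    also have "\<dots> = X$z$k * X$z$i" by (simp add: col_entry sym[of i z])
    finally show ?thesis .
  qed
  define S where "S = {i. i \<noteq> z \<and> X$z$i = 1}"
  have v: "X$z$i = lift_chi z S $ i" for i
  proof (cases "i = z")
    case True then show ?thesis using zz by (simp add: lift_chi_def)
  next
    case False
    have "X$z$i = X$z$i * X$z$i" using ent[of i i] dg[OF False] by simp
    then have "X$z$i * (X$z$i - 1) = 0" by (simp add: right_diff_distrib)
    then have "X$z$i = 0 \<or> X$z$i = 1" by simp
    then show ?thesis using False by (auto simp: lift_chi_def S_def)
  qed
  have e2: "X$i$k = outer (lift_chi z S) $ i $ k" for i k
  proof -
    have "X$i$k = X$z$k * X$z$i" by (rule ent)
    also have "\<dots> = lift_chi z S $ i * lift_chi z S $ k" by (simp only: v mult.commute)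
    finally show ?thesis by (simp only: outer_entry)
  qed
  have "X = outer (lift_chi z S)"
    by (simp only: vec_eq_iff e2 simp_thms)
  moreover have "S \<subseteq> UNIV - {z}" by (auto simp: S_def)
  ultimately show ?thesis by blast
qed



definition Sy :: "'n \<Rightarrow> 'n \<Rightarrow> real^'n^'n" where "Sy i j = Em i j + Em j i"

lemma Sy_entry: "Sy i j $ a $ b = (if a = i \<and> b = j then 1 else 0) + (if a = j \<and> b = i then 1 else 0)"
  by (simp add: Sy_def Em_entry)

lemma delta2: "(\<Sum>i\<in>(UNIV::'n::finite set). \<Sum>j\<in>(UNIV::'m::finite set). if a = i \<and> b = j then f i j else (0::real)) = f a b"
proof -
  have "(\<Sum>j\<in>(UNIV::'m set). if a = i \<and> b = j then f i j else (0::real)) = (if a = i then f a b else 0)" for i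
  proof (cases "a = i")
    case True
    have "(\<Sum>j\<in>(UNIV::'m set). if a = i \<and> b = j then f i j else (0::real)) = (\<Sum>j\<in>UNIV. if b = j then f a j else 0)"
      using True by simp
    also have "\<dots> = f a b" by (simp add: sum.delta)
    finally show ?thesis using True by simp
  qed simp
  then show ?thesis by (simp add: sum.delta)
qed

lemma delta2': "(\<Sum>i\<in>(UNIV::'n::finite set). \<Sum>j\<in>(UNIV::'n set). if a = j \<and> b = i then f i j else (0::real)) = f b a"
proof -
  have "(\<Sum>j\<in>(UNIV::'n set). if a = j \<and> b = i then f i j else (0::real)) = (if b = i then f b a else 0)" for i
  proof (cases "b = i")
    case True
    have "(\<Sum>j\<in>(UNIV::'n set). if a = j \<and> b = i then f i j else (0::real)) = (\<Sum>j\<in>UNIV. if a = j then f b j else 0)"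
      using True by simp
    also have "\<dots> = f b a" by (simp add: sum.delta)
    finally show ?thesis using True by simp
  qed simp
  then show ?thesis by (simp add: sum.delta)
qed

lemma mult_ind: "c * (if P then 1 else 0) = (if P then c else (0::real))"
  by (cases P) (simp_all only: if_True if_False mult_1_right mult_zero_right)

lemma Sy_term: "c * Sy i j $ a $ b = (if a = i \<and> b = j then c else 0) + (if a = j \<and> b = i then c else (0::real))"
  by (simp only: Sy_entry distrib_left mult_ind)

lemma sym_mats_span_Sy:
  assumes "A \<in> sym_mats"
  shows "A = (\<Sum>i\<in>UNIV. \<Sum>j\<in>UNIV. (A$i$j / 2) *\<^sub>R Sy i j)"
proof -
  have s: "A$i$j = A$j$i" for i j using assms sym_entry unfolding sym_mats_def by blast
  show ?thesis
  proof (simp only: vec_eq_iff, intro allI)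
    fix a b
    have "(\<Sum>i\<in>UNIV. \<Sum>j\<in>UNIV. (A$i$j / 2) *\<^sub>R Sy i j) $ a $ b
        = (\<Sum>i\<in>UNIV. \<Sum>j\<in>UNIV. (A$i$j / 2) * Sy i j $ a $ b)" by simp
    also have "\<dots> = A$a$b / 2 + A$b$a / 2"
      by (simp only: Sy_term sum.distrib delta2 delta2')
    also have "\<dots> = A$a$b" using s[of a b] by simp
    finally show "A $ a $ b = (\<Sum>i\<in>UNIV. \<Sum>j\<in>UNIV. (A$i$j / 2) *\<^sub>R Sy i j) $ a $ b" by simp
  qed
qed



lemma transpose_add: "transpose ((A::real^'n^'n) + B) = transpose A + transpose B"
  by (simp add: transpose_def vec_eq_iff)

lemma transpose_diff: "transpose ((A::real^'n^'n) - B) = transpose A - transpose B"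
  by (simp add: transpose_def vec_eq_iff)

lemma transpose_uminus: "transpose (- (A::real^'n^'n)) = - transpose A"
  by (simp add: transpose_def vec_eq_iff)

lemma transpose_zero: "transpose (0::real^'n^'n) = 0"
  by (simp add: transpose_def vec_eq_iff)

lemma subspace_sym: "subspace (sym_mats :: (real^'n^'n) set)"
  unfolding subspace_def sym_mats_def
  by (simp add: transpose_add transpose_scalar transpose_zero)

lemma Em_transpose: "transpose (Em i j) = Em j i"
  unfolding vec_eq_iff transpose_def by (auto simp: Em_entry)

lemma Em_sym: "Em i i \<in> sym_mats"
  unfolding sym_mats_def vec_eq_iff transpose_def by (auto simp: Em_entry)

lemma Sy_sym: "Sy i j \<in> sym_mats"
  unfolding sym_mats_def Sy_def by (simp add: transpose_add Em_transpose add.commute)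

lemma outer_sym': "outer w \<in> sym_mats"
  by (simp add: sym_mats_def outer_sym)

lemma Sy_comm: "Sy i j = Sy j i" by (simp add: Sy_def add.commute)

lemma Sy_inner: "Sy i j \<bullet> Y = Y$i$j + Y$j$i"
  by (simp add: Sy_def inner_add_left Em_inner)

lemma QQ_facts:
  assumes "Y \<in> QQ z"
  shows "psd Y" "Y$z$z = 1" "\<And>i. i \<noteq> z \<Longrightarrow> Y$i$i = Y$z$i" "\<And>i j. Y$i$j = Y$j$i"
proof -
  show 1: "psd Y" using assms by (simp add: QQ_def)
  show "Y$z$z = 1" using assms by (simp add: QQ_def)
  show "\<And>i. i \<noteq> z \<Longrightarrow> Y$i$i = Y$z$i" using assms by (simp add: QQ_def)
  have "transpose Y = Y" using 1 by (simp add: psd_def)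
  then show "\<And>i j. Y$i$j = Y$j$i" by (rule sym_entry)
qed



lemma vertex_outer2:
  assumes CQ: "C \<subseteq> QQ z" and S: "S \<subseteq> UNIV - {z}" and XC: "outer (lift_chi z S) \<in> C"
  shows "is_vertex sym_mats C (outer (lift_chi z S))"
proof -
  define v where "v = lift_chi z S"
  define X where "X = outer v"
  define N where "N = normal_cone sym_mats C X"
  have vz: "v$z = 1" by (simp add: v_def lc_z)
  have v01: "v$i = 0 \<or> v$i = 1" for i by (simp add: v_def lc_01)
  have XC': "X \<in> C" using XC by (simp add: X_def v_def)
  have XQ: "X \<in> QQ z" using XC' CQ by blast
  have ss: "subspace (sym_mats :: (real^'a^'a) set)" by (rule subspace_sym)
  have nN: "A \<in> N" if "A \<in> sym_mats" "\<And>Y. Y \<in> QQ z \<Longrightarrow> A \<bullet> Y \<le> A \<bullet> X" for A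
    using that CQ unfolding N_def normal_cone_def by blast
  have n1: "Em z z \<in> N" "- Em z z \<in> N"
    using QQ_facts(2)[OF XQ] by (auto intro!: nN Em_sym subspace_neg[OF ss] simp: Em_inner QQ_facts(2))
  define G where "G i = Em i i - (1/2) *\<^sub>R Sy z i" for i
  have Gsym: "G i \<in> sym_mats" for i
    unfolding G_def by (intro subspace_diff[OF ss] subspace_scale[OF ss] Em_sym Sy_sym)
  have Gin: "G i \<bullet> Y = 0" if "Y \<in> QQ z" "i \<noteq> z" for i Y
    using QQ_facts(3,4)[OF that(1)] that(2)
    by (simp add: G_def inner_diff_left Em_inner Sy_inner)
  have n2: "G i \<in> N" "- G i \<in> N" if "i \<noteq> z" for i
    using that XQ by (auto intro!: nN Gsym subspace_neg[OF ss] simp: Gin)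
  have n3: "- outer w \<in> N" if "w \<bullet> v = 0" for w
  proof (rule nN)
    show "- outer w \<in> sym_mats" by (intro subspace_neg[OF ss] outer_sym')
    fix Y assume "Y \<in> QQ z"
    then have "0 \<le> w \<bullet> (Y *v w)" using QQ_facts(1) unfolding psd_def by blast
    moreover have "w \<bullet> (X *v w) = 0" using that by (simp add: X_def outer_mv inner_commute)
    ultimately show "- outer w \<bullet> Y \<le> - outer w \<bullet> X" by (simp add: outer_inner)
  qed
  define SP where "SP = span N"
  have Ezz: "Em z z \<in> SP" using n1 by (simp add: SP_def span_base)
  have GSP: "G i \<in> SP" if "i \<noteq> z" for i using n2[OF that] by (simp add: SP_def span_base)
  have oSP: "outer w \<in> SP" if "w \<bullet> v = 0" for w
    using span_neg[OF span_base[OF n3[OF that]]] by (simp add: SP_def)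
  have diag: "Em i i \<in> SP \<and> Sy i z \<in> SP" if iz: "i \<noteq> z" for i
  proof -
    define w where "w = axis i 1 - v$i *\<^sub>R axis z (1::real)"
    have wv: "w \<bullet> v = 0" using vz by (simp add: w_def inner_diff_left inner_axis')
    have ow: "outer w = Em i i + (v$i * v$i) *\<^sub>R Em z z - v$i *\<^sub>R Sy i z"
      using iz by (auto simp: vec_eq_iff w_def outer_entry axis_def Em_entry Sy_entry)
    have o: "outer w \<in> SP" using oSP[OF wv] .
    show ?thesis
    proof (cases "v$i = 0")
      case True
      have e: "Em i i \<in> SP" using o True ow by simp
      have h: "Em i i - G i = (1/2) *\<^sub>R Sy i z"
        by (simp only: G_def Sy_comm[of z i] diff_diff_eq2 add_diff_cancel_left')
      have two: "(2::real) * (1/2) = 1" by simp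
      have "2 *\<^sub>R (Em i i - G i) = Sy i z" by (simp only: h scaleR_scaleR two scaleR_one)
      then have "Sy i z = 2 *\<^sub>R (Em i i - G i)" by (rule sym)
      then have "Sy i z \<in> SP" using e GSP[OF iz] by (simp add: SP_def span_scale span_diff)
      with e show ?thesis by simp
    next
      case False
      then have v1: "v$i = 1" using v01 by blast
      have ow1: "outer w = Em i i + Em z z - Sy i z" using ow v1 by simp
      have h1: "G i - outer w + Em z z = (1/2) *\<^sub>R Sy i z"
        by (simp add: vec_eq_iff ow1 G_def Sy_comm[of z i] algebra_simps)
      have two: "(2::real) * (1/2) = 1" by simp
      have "2 *\<^sub>R (G i - outer w + Em z z) = Sy i z" by (simp only: h1 scaleR_scaleR two scaleR_one)
      then have "Sy i z = 2 *\<^sub>R (G i - outer w + Em z z)" by (rule sym)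
      then have s: "Sy i z \<in> SP" using o Ezz GSP[OF iz]
        by (simp add: SP_def span_scale span_diff span_add)
      have "Em i i = outer w - Em z z + Sy i z" by (simp add: ow1)
      then have "Em i i \<in> SP" using o Ezz s by (simp add: SP_def span_diff span_add)
      with s show ?thesis by simp
    qed
  qed
  have offd: "Sy i j \<in> SP" if ij: "i \<noteq> j" "i \<noteq> z" "j \<noteq> z" for i j
  proof -
    define s where "s = v$i + v$j"
    define w where "w = axis i 1 + axis j 1 - s *\<^sub>R axis z (1::real)"
    have wv: "w \<bullet> v = 0" using vz by (simp add: w_def s_def inner_diff_left inner_add_left inner_axis')
    have ow: "outer w = Em i i + Em j j + (s * s) *\<^sub>R Em z z + Sy i j - s *\<^sub>R Sy i z - s *\<^sub>R Sy j z"
      using ij by (auto simp: vec_eq_iff w_def outer_entry axis_def Em_entry Sy_entry)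
    have "Sy i j = outer w - Em i i - Em j j - (s * s) *\<^sub>R Em z z + s *\<^sub>R Sy i z + s *\<^sub>R Sy j z"
      by (simp add: ow)
    moreover have "outer w \<in> SP" using oSP[OF wv] .
    ultimately show ?thesis using diag[OF ij(2)] diag[OF ij(3)] Ezz
      by (simp add: SP_def span_scale span_diff span_add)
  qed
  have allSy: "Sy i j \<in> SP" for i j
  proof -
    have EE: "Em k k \<in> SP" for k using diag Ezz by (cases "k = z") auto
    consider "i = j" | "i \<noteq> j" "i = z" | "i \<noteq> j" "j = z" | "i \<noteq> j" "i \<noteq> z" "j \<noteq> z" by blast
    then show ?thesis
    proof cases
      case 1
      have "Sy i j = 2 *\<^sub>R Em i i" using 1 by (simp add: Sy_def scaleR_2)
      then show ?thesis using EE[of i] by (simp add: SP_def span_scale)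
    next
      case 2 then show ?thesis using diag[of j] Sy_comm[of i j] by auto
    next
      case 3 then show ?thesis using diag[of i] by auto
    next
      case 4 then show ?thesis using offd by blast
    qed
  qed
  have symSP: "sym_mats \<subseteq> SP"
  proof
    fix A :: "real^'a^'a" assume A: "A \<in> sym_mats"
    have "(\<Sum>i\<in>UNIV. \<Sum>j\<in>UNIV. (A$i$j / 2) *\<^sub>R Sy i j) \<in> SP"
      unfolding SP_def by (intro span_sum span_scale) (use allSy in \<open>simp add: SP_def\<close>)
    then show "A \<in> SP" using sym_mats_span_Sy[OF A] by simp
  qed
  have Nsym: "N \<subseteq> sym_mats" by (auto simp: N_def normal_cone_def)
  have "span N = span sym_mats"
    unfolding span_eq using Nsym symSP span_superset unfolding SP_def by blast
  then have "dim N = dim (sym_mats :: (real^'a^'a) set)" by (rule span_eq_dim)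
  then show ?thesis using XC' unfolding is_vertex_def N_def X_def v_def by simp
qed



lemma mm_add_r: "((A::real^'n^'n) + B) ** C = A ** C + B ** C"
  by (vector matrix_matrix_mult_def sum.distrib[symmetric] field_simps)

lemma psd_scale: "psd A \<Longrightarrow> 0 \<le> r \<Longrightarrow> psd (r *\<^sub>R (A::real^'n^'n))"
  unfolding psd_def by (simp add: transpose_scalar scaleR_matrix_vector_assoc[symmetric])

lemma poly_zero:
  fixes \<alpha> \<beta> \<epsilon> :: real
  assumes e: "\<epsilon> > 0" and H: "\<And>t. \<bar>t\<bar> < \<epsilon> \<Longrightarrow> t * \<alpha> + t^2 * \<beta> \<le> 0"
  shows "\<alpha> = 0"
proof (rule ccontr)
  assume a: "\<alpha> \<noteq> 0"
  define s where "s = min (\<epsilon> / (2 * \<bar>\<alpha>\<bar>)) (1 / (2 * (\<bar>\<beta>\<bar> + 1)))"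
  have s0: "s > 0" using e a by (simp add: s_def)
  have s1: "s * \<bar>\<alpha>\<bar> \<le> \<epsilon> / 2"
  proof -
    have "s \<le> \<epsilon> / (2 * \<bar>\<alpha>\<bar>)" by (simp add: s_def)
    then have "s * \<bar>\<alpha>\<bar> \<le> \<epsilon> / (2 * \<bar>\<alpha>\<bar>) * \<bar>\<alpha>\<bar>" by (rule mult_right_mono) simp
    also have "\<dots> = \<epsilon> / 2" using a by simp
    finally show ?thesis .
  qed
  have s2: "s * \<bar>\<beta>\<bar> \<le> 1/2"
  proof -
    have "s \<le> 1 / (2 * (\<bar>\<beta>\<bar> + 1))" by (simp add: s_def)
    then have "s * \<bar>\<beta>\<bar> \<le> 1 / (2 * (\<bar>\<beta>\<bar> + 1)) * \<bar>\<beta>\<bar>" by (rule mult_right_mono) simp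
    also have "\<dots> \<le> 1/2" by (simp add: field_simps)
    finally show ?thesis .
  qed
  have "\<bar>s * \<alpha>\<bar> < \<epsilon>" using s1 s0 e by (simp add: abs_mult)
  then have "(s * \<alpha>) * \<alpha> + (s * \<alpha>)^2 * \<beta> \<le> 0" by (rule H)
  moreover have "(s * \<alpha>) * \<alpha> + (s * \<alpha>)^2 * \<beta> = s * \<alpha>^2 * (1 + s * \<beta>)"
    by (simp add: power2_eq_square algebra_simps)
  moreover have "1 + s * \<beta> > 0"
  proof -
    have "- \<bar>\<beta>\<bar> \<le> \<beta>" by simp
    then have "s * (- \<bar>\<beta>\<bar>) \<le> s * \<beta>" by (rule mult_left_mono) (use s0 in simp)
    then have "- (s * \<bar>\<beta>\<bar>) \<le> s * \<beta>" by simp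
    then show ?thesis using s2 by linarith
  qed
  moreover have "s * \<alpha>^2 > 0" using s0 a by simp
  ultimately show False by (metis mult_pos_pos not_less)
qed

lemma not_vertex:
  fixes X D W2 :: "real^'n^'n"
  assumes XC: "X \<in> C" and Ds: "D \<in> sym_mats" and D0: "D \<noteq> 0" and e: "\<epsilon> > 0" and q: "q \<ge> 0"
    and H: "\<And>t. \<bar>t\<bar> < \<epsilon> \<Longrightarrow> (1 / (1 + t^2 * q)) *\<^sub>R (X + t *\<^sub>R D + t^2 *\<^sub>R W2) \<in> C"
  shows "\<not> is_vertex sym_mats C X"
proof
  assume "is_vertex sym_mats C X"
  then have dimeq: "dim (normal_cone sym_mats C X) = dim (sym_mats :: (real^'n^'n) set)"
    unfolding is_vertex_def by blast
  define HD where "HD = {A::real^'n^'n. transpose A = A \<and> A \<bullet> D = 0}"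
  have NH: "normal_cone sym_mats C X \<subseteq> HD"
  proof
    fix c assume c: "c \<in> normal_cone sym_mats C X"
    then have cs: "c \<in> sym_mats" and cle: "\<And>y. y \<in> C \<Longrightarrow> c \<bullet> y \<le> c \<bullet> X"
      unfolding normal_cone_def by auto
    have "t * (c \<bullet> D) + t^2 * (c \<bullet> W2 - q * (c \<bullet> X)) \<le> 0" if t: "\<bar>t\<bar> < \<epsilon>" for t
    proof -
      define \<rho> where "\<rho> = 1 + t^2 * q"
      have r0: "\<rho> > 0" using q by (simp add: \<rho>_def add_pos_nonneg)
      define Z where "Z = X + t *\<^sub>R D + t^2 *\<^sub>R W2"
      have yC: "(1 / \<rho>) *\<^sub>R Z \<in> C" using H[OF t] by (simp add: \<rho>_def Z_def)
      have "c \<bullet> ((1 / \<rho>) *\<^sub>R Z) \<le> c \<bullet> X" by (rule cle[OF yC])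
      moreover have "c \<bullet> ((1 / \<rho>) *\<^sub>R Z) = (c \<bullet> Z) / \<rho>" by (simp add: inner_scaleR_right)
      ultimately have "(c \<bullet> Z) / \<rho> \<le> c \<bullet> X" by simp
      then have "c \<bullet> Z \<le> (c \<bullet> X) * \<rho>" using r0 by (simp add: pos_divide_le_eq)
      moreover have "c \<bullet> Z = c \<bullet> X + t * (c \<bullet> D) + t^2 * (c \<bullet> W2)" by (simp add: Z_def inner_add_right)
      ultimately have "c \<bullet> X + t * (c \<bullet> D) + t^2 * (c \<bullet> W2) \<le> (c \<bullet> X) * \<rho>" by simp
      then show ?thesis by (simp add: \<rho>_def algebra_simps)
    qed
    then have "c \<bullet> D = 0" using poly_zero[OF e] by blast
    then show "c \<in> HD" using cs by (simp add: HD_def sym_mats_def)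
  qed
  have sHD: "subspace HD"
    unfolding subspace_def HD_def by (simp add: transpose_add transpose_scalar inner_add_left transpose_zero)
  have "span (normal_cone sym_mats C X) \<subseteq> HD" using NH sHD by (simp add: span_minimal)
  moreover have "D \<notin> HD" using D0 by (simp add: HD_def)
  moreover have "D \<in> span sym_mats" using Ds by (simp add: span_base)
  moreover have "span (normal_cone sym_mats C X) \<subseteq> span sym_mats"
    by (rule span_mono) (auto simp: normal_cone_def)
  ultimately have "span (normal_cone sym_mats C X) \<subset> span sym_mats" by blast
  then have "dim (normal_cone sym_mats C X) < dim (sym_mats :: (real^'n^'n) set)" by (rule dim_psubset)
  with dimeq show False by simp
qed



lemma mult_if0: "x * (if P then b else 0) = (if P then x * b else (0::real))" by simp

lemma core:
  fixes X :: "real^'n^'n" and c :: "real^'n"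
  assumes XQ: "X \<in> QQ z" and cz: "(X *v c)$z = 0" and c0: "X *v c \<noteq> 0"
  shows "\<exists>D W2 q \<epsilon>. D \<in> sym_mats \<and> D \<noteq> 0 \<and> \<epsilon> > 0 \<and> q \<ge> 0 \<and>
    (\<forall>t. \<bar>t\<bar> < \<epsilon> \<longrightarrow> (1 / (1 + t^2 * q)) *\<^sub>R (X + t *\<^sub>R D + t^2 *\<^sub>R W2) \<in> QQ z \<and>
       (X \<in> QQ' z \<longrightarrow> (1 / (1 + t^2 * q)) *\<^sub>R (X + t *\<^sub>R D + t^2 *\<^sub>R W2) \<in> QQ' z))"
proof -
  have psd: "psd X" by (rule QQ_facts(1)[OF XQ])
  have zz: "X$z$z = 1" by (rule QQ_facts(2)[OF XQ])
  have dg: "\<And>i. i \<noteq> z \<Longrightarrow> X$i$i = X$z$i" by (rule QQ_facts(3)[OF XQ])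
  have symT: "transpose X = X" using psd by (simp add: psd_def)
  have sym: "X$i$j = X$j$i" for i j using sym_entry[OF symT] .
  define y where "y = X *v c"
  define a where "a j = y$j / X$j$j" for j
  have ay: "a j * X$j$j = y$j" for j
  proof (cases "X$j$j = 0")
    case True
    then have "X$j$m = 0" for m using psd_zero_row[OF psd] by blast
    then have "y$j = 0" by (simp add: y_def matrix_vector_mult_def)
    then show ?thesis using True by (simp add: a_def)
  next
    case False then show ?thesis by (simp add: a_def)
  qed
  define K :: "real^'n^'n" where "K = (\<chi> i k. if k = z then c$i else if i = k then a i else 0)"
  define M where "M t = mat 1 + t *\<^sub>R K" for t :: real
  define D where "D = transpose K ** X + X ** K"
  define W2 where "W2 = transpose K ** X ** K"
  define q where "q = c \<bullet> y"
  have q0: "q \<ge> 0" using psd unfolding psd_def q_def y_def by blast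
  have poly: "transpose (M t) ** X ** M t = X + t *\<^sub>R D + t^2 *\<^sub>R W2" for t
  proof -
    have tM: "transpose (M t) = mat 1 + t *\<^sub>R transpose K" by (simp add: M_def transpose_add transpose_scalar)
    have "transpose (M t) ** X = X + t *\<^sub>R (transpose K ** X)"
      by (simp add: tM mm_add_r scalar_matrix_assoc[symmetric])
    then have "transpose (M t) ** X ** M t = (X + t *\<^sub>R (transpose K ** X)) ** (mat 1 + t *\<^sub>R K)"
      by (simp add: M_def)
    also have "\<dots> = X + t *\<^sub>R (X ** K) + t *\<^sub>R (transpose K ** X) + (t * t) *\<^sub>R (transpose K ** X ** K)"
      by (simp add: matrix_add_ldistrib mm_add_r matrix_scalar_ac scalar_matrix_assoc[symmetric] scaleR_add_right)
    also have "\<dots> = X + t *\<^sub>R D + t^2 *\<^sub>R W2"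
      by (simp add: D_def W2_def power2_eq_square scaleR_add_right)
    finally show ?thesis .
  qed
  have Kz: "K *v axis z 1 = c" by (simp add: vec_eq_iff col_entry K_def)
  have Kj: "K *v axis j 1 = a j *\<^sub>R axis j 1" if jz: "j \<noteq> z" for j
  proof -
    have "(K *v axis j 1)$i = (a j *\<^sub>R axis j 1)$i" for i
    proof -
      have "(K *v axis j 1)$i = K$i$j" by (rule col_entry)
      also have "\<dots> = (a j *\<^sub>R axis j 1)$i" using jz by (simp add: K_def axis_def)
      finally show ?thesis .
    qed
    then show ?thesis by (simp add: vec_eq_iff)
  qed
  have Mv: "M t *v x = x + t *\<^sub>R (K *v x)" for t x
    by (simp add: M_def matrix_vector_mult_add_rdistrib scaleR_matrix_vector_assoc[symmetric])
  have Mz: "M t *v axis z 1 = axis z 1 + t *\<^sub>R c" for t by (simp add: Mv Kz)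
  have Mj: "M t *v axis j 1 = (1 + t * a j) *\<^sub>R axis j 1" if "j \<noteq> z" for t j
    using that by (simp add: Mv Kj scaleR_add_left)
  have h1: "axis z 1 \<bullet> (X *v c) = 0" using cz by (simp add: inner_axis')
  have h2: "c \<bullet> (X *v axis z 1) = 0" using h1 sym_quad[OF symT] by metis
  have h3: "c \<bullet> (X *v axis j 1) = y$j" for j
    using sym_quad[OF symT, of c "axis j 1"] by (simp add: inner_axis' y_def)
  have hq: "c \<bullet> (X *v c) = q" by (simp add: q_def y_def)
  define W where "W t = transpose (M t) ** X ** M t" for t
  have Wzz: "W t $ z $ z = 1 + t^2 * q" for t
    unfolding W_def cong_entry Mz
    by (simp add: inner_add_left inner_add_right matrix_vector_right_distrib matrix_vector_mult_scaleR
        entry_axis h1 h2 hq zz power2_eq_square)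
  have Wzj: "W t $ z $ j = (1 + t * a j) * (X$z$j + t * y$j)" if "j \<noteq> z" for t j
    unfolding W_def cong_entry Mz Mj[OF that]
    by (simp add: inner_add_left inner_add_right matrix_vector_right_distrib matrix_vector_mult_scaleR
        entry_axis h3 algebra_simps)
  have Wjk: "W t $ j $ k = (1 + t * a j) * (1 + t * a k) * X$j$k" if "j \<noteq> z" "k \<noteq> z" for t j k
    unfolding W_def cong_entry Mj[OF that(1)] Mj[OF that(2)]
    by (simp add: matrix_vector_mult_scaleR entry_axis algebra_simps)
  define \<rho> where "\<rho> t = 1 + t^2 * q" for t
  have r0: "\<rho> t > 0" for t using q0 by (simp add: \<rho>_def add_pos_nonneg)
  define Y where "Y t = (1 / \<rho> t) *\<^sub>R W t" for t
  have Yeq: "Y t = (1 / (1 + t^2 * q)) *\<^sub>R (X + t *\<^sub>R D + t^2 *\<^sub>R W2)" for t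
    by (simp add: Y_def \<rho>_def W_def poly)
  have Yent: "Y t $ i $ k = W t $ i $ k / \<rho> t" for t i k by (simp add: Y_def)
  have YQ: "Y t \<in> QQ z" for t
  proof -
    have "psd (Y t)" unfolding Y_def W_def
      by (rule psd_scale[OF psd_cong[OF psd]]) (use r0[of t] in simp)
    moreover have "Y t $ z $ z = 1" using r0[of t] by (simp add: Yent Wzz \<rho>_def)
    moreover have "Y t $ i $ i = Y t $ z $ i" if "i \<noteq> z" for i
    proof -
      have "X$z$i + t * y$i = (1 + t * a i) * X$i$i"
        using dg[OF that] ay[of i] by (simp add: algebra_simps)
      then have "W t $ i $ i = W t $ z $ i"
        by (simp add: Wjk[OF that that] Wzj[OF that])
      then show ?thesis by (simp add: Yent)
    qed
    ultimately show ?thesis unfolding QQ_def by blast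
  qed
  define Sa where "Sa = (\<Sum>j\<in>UNIV. \<bar>a j\<bar>)"
  define \<epsilon> where "\<epsilon> = 1 / (1 + Sa)"
  have Sa0: "Sa \<ge> 0" by (simp add: Sa_def sum_nonneg)
  have e0: "\<epsilon> > 0" using Sa0 by (simp add: \<epsilon>_def)
  have pos: "1 + t * a j > 0" if t: "\<bar>t\<bar> < \<epsilon>" for t j
  proof -
    have aj: "\<bar>a j\<bar> \<le> Sa" unfolding Sa_def by (rule member_le_sum) auto
    have "\<bar>t\<bar> * (1 + Sa) < 1" using t Sa0 by (simp add: \<epsilon>_def pos_less_divide_eq)
    then have "\<bar>t\<bar> * Sa < 1" by (simp add: algebra_simps)
    moreover have "\<bar>t\<bar> * \<bar>a j\<bar> \<le> \<bar>t\<bar> * Sa" using aj by (simp add: mult_left_mono)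
    ultimately have "\<bar>t * a j\<bar> < 1" by (simp add: abs_mult)
    then show ?thesis by linarith
  qed
  have YQ': "Y t \<in> QQ' z" if t: "\<bar>t\<bar> < \<epsilon>" and X': "X \<in> QQ' z" for t
  proof -
    have "0 \<le> Y t $ i $ j" if "i \<noteq> z" "j \<noteq> z" for i j
    proof -
      have "0 \<le> X$i$j" using X' that unfolding QQ'_def by blast
      then have "0 \<le> (1 + t * a i) * (1 + t * a j) * X$i$j"
        using pos[OF t, of i] pos[OF t, of j] by simp
      then show ?thesis using r0[of t] by (simp add: Yent Wjk[OF that])
    qed
    then show ?thesis using YQ[of t] unfolding QQ'_def by blast
  qed
  have Dsym: "D \<in> sym_mats"
    by (simp add: sym_mats_def D_def transpose_add matrix_transpose_mul symT add.commute)
  obtain j where yj: "y$j \<noteq> 0" using c0 by (auto simp: y_def vec_eq_iff)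
  have jz: "j \<noteq> z" using yj cz by (auto simp: y_def)
  have D1: "(transpose K ** X)$z$j = y$j"
    by (simp add: matrix_matrix_mult_def transpose_def K_def y_def matrix_vector_mult_def sym[of _ j] mult.commute)
  have "(X ** K)$z$j = (\<Sum>m\<in>UNIV. if m = j then X$z$m * a m else 0)"
    using jz by (simp add: matrix_matrix_mult_def K_def mult_if0)
  also have "\<dots> = X$z$j * a j" by (simp add: sum.delta')
  also have "\<dots> = y$j" using dg[OF jz] ay[of j] by (simp add: mult.commute)
  finally have D2: "(X ** K)$z$j = y$j" .
  have "D$z$j = 2 * y$j" by (simp add: D_def D1 D2)
  then have D0: "D \<noteq> 0" using yj by auto
  show ?thesis
    apply (rule exI[of _ D], rule exI[of _ W2], rule exI[of _ q], rule exI[of _ \<epsilon>])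
    using Dsym D0 e0 q0 YQ YQ' by (simp add: Yeq[symmetric])
qed



definition Sm :: "'n \<Rightarrow> real^'n^'n" where
  "Sm z = (\<chi> i k. if k = z then (if i = z then 1 else 0) else (if i = z then 1 else if i = k then -1 else 0))"

definition Phi :: "'n \<Rightarrow> real^'n^'n \<Rightarrow> real^'n^'n" where
  "Phi z A = transpose (Sm z) ** A ** Sm z"

lemma Smz: "Sm z *v axis z 1 = axis z 1"
proof -
  have "(Sm z *v axis z 1)$i = (axis z (1::real))$i" for i
  proof -
    have "(Sm z *v axis z 1)$i = Sm z$i$z" by (rule col_entry)
    also have "\<dots> = (axis z (1::real))$i" by (simp add: Sm_def axis_def)
    finally show ?thesis .
  qed
  then show ?thesis by (simp add: vec_eq_iff)
qed

lemma Smk: "k \<noteq> z \<Longrightarrow> Sm z *v axis k 1 = axis z 1 - axis k 1"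
proof -
  assume kz: "k \<noteq> z"
  have "(Sm z *v axis k 1)$i = (axis z 1 - axis k (1::real))$i" for i
  proof -
    have "(Sm z *v axis k 1)$i = Sm z$i$k" by (rule col_entry)
    also have "\<dots> = (axis z 1 - axis k (1::real))$i" using kz by (simp add: Sm_def axis_def)
    finally show ?thesis .
  qed
  then show ?thesis by (simp add: vec_eq_iff)
qed

lemma mat_eq_cols: "(\<And>k. (A::real^'n^'n) *v axis k 1 = B *v axis k 1) \<Longrightarrow> A = B"
  by (metis col_entry vec_eq_iff)

lemma SS: "Sm z ** Sm z = mat 1"
proof (rule mat_eq_cols)
  fix k
  show "(Sm z ** Sm z) *v axis k 1 = mat 1 *v axis k 1"
  proof (cases "k = z")
    case True then show ?thesis by (simp add: matrix_vector_mul_assoc[symmetric] Smz)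
  next
    case False then show ?thesis
      by (simp add: matrix_vector_mul_assoc[symmetric] Smk Smz matrix_vector_mult_diff_distrib)
  qed
qed

lemma SSt: "transpose (Sm z) ** transpose (Sm z) = mat 1"
  by (simp add: matrix_transpose_mul[symmetric] SS)

lemma PhiPhi: "Phi z (Phi z A) = A"
proof -
  have "Phi z (Phi z A) = (transpose (Sm z) ** transpose (Sm z)) ** A ** (Sm z ** Sm z)"
    by (simp add: Phi_def matrix_mul_assoc)
  then show ?thesis by (simp add: SS SSt)
qed

lemma Phi_add: "Phi z (A + B) = Phi z A + Phi z B"
  by (simp add: Phi_def matrix_add_ldistrib mm_add_r)

lemma Phi_scale: "Phi z (r *\<^sub>R A) = r *\<^sub>R Phi z A"
  by (simp add: Phi_def matrix_scalar_ac scalar_matrix_assoc[symmetric])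

lemma Phi_transpose: "transpose (Phi z A) = Phi z (transpose A)"
  by (simp add: Phi_def matrix_transpose_mul matrix_mul_assoc)

lemma Phi_ent: "Phi z A $ i $ k = (Sm z *v axis i 1) \<bullet> (A *v (Sm z *v axis k 1))"
  by (simp add: Phi_def cong_entry)

lemma quad_diff:
  fixes X :: "real^'n^'n"
  shows "(axis z 1 - axis i 1) \<bullet> (X *v (axis z 1 - axis j 1)) = X$z$z - X$z$j - X$i$z + X$i$j"
  by (simp add: inner_diff_left inner_diff_right matrix_vector_mult_diff_distrib entry_axis)

lemma Phi_QQ: assumes "X \<in> QQ z" shows "Phi z X \<in> QQ z"
proof -
  have psd: "psd X" and zz: "X$z$z = 1" and dg: "\<And>i. i \<noteq> z \<Longrightarrow> X$i$i = X$z$i"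
    and sym: "\<And>i j. X$i$j = X$j$i" using QQ_facts[OF assms] by auto
  have "psd (Phi z X)" unfolding Phi_def by (rule psd_cong[OF psd])
  moreover have "Phi z X $ z $ z = 1" by (simp add: Phi_ent Smz entry_axis zz)
  moreover have "Phi z X $ i $ i = Phi z X $ z $ i" if "i \<noteq> z" for i
  proof -
    have "Phi z X $ i $ i = X$z$z - X$z$i - X$i$z + X$i$i" by (simp add: Phi_ent Smk[OF that] quad_diff)
    moreover have "Phi z X $ z $ i = X$z$z - X$z$i"
      by (simp add: Phi_ent Smk[OF that] Smz inner_diff_right matrix_vector_mult_diff_distrib entry_axis)
    ultimately show ?thesis using dg[OF that] sym[of i z] by simp
  qed
  ultimately show ?thesis unfolding QQ_def by blast
qed

lemma Phi_QQ'': assumes "X \<in> QQ'' z" shows "Phi z X \<in> QQ' z"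
proof -
  have XQ: "X \<in> QQ z" using assms by (simp add: QQ''_def)
  have psd: "psd X" using QQ_facts[OF XQ] by auto
  have "0 \<le> Phi z X $ i $ j" if "i \<noteq> z" "j \<noteq> z" for i j
  proof (cases "i = j")
    case True
    have "Phi z X $ i $ j = (axis z 1 - axis i 1) \<bullet> (X *v (axis z 1 - axis i 1))"
      using True that by (simp add: Phi_ent Smk)
    then show ?thesis using psd unfolding psd_def by simp
  next
    case False
    then show ?thesis using assms that by (simp add: QQ''_def Phi_ent Smk)
  qed
  then show ?thesis using Phi_QQ[OF XQ] unfolding QQ'_def by blast
qed

lemma Phi_back: assumes "Y \<in> QQ' z" shows "Phi z Y \<in> QQ'' z"
proof -
  have YQ: "Y \<in> QQ z" using assms by (simp add: QQ'_def)
  have "0 \<le> (axis z 1 - axis i 1) \<bullet> (Phi z Y *v (axis z 1 - axis j 1))" if "i \<noteq> z" "j \<noteq> z" for i j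
  proof -
    have "(axis z 1 - axis i 1) \<bullet> (Phi z Y *v (axis z 1 - axis j 1)) = Phi z (Phi z Y) $ i $ j"
      using that by (simp add: Phi_ent Smk)
    also have "\<dots> = Y $ i $ j" by (simp add: PhiPhi)
    finally show ?thesis using assms that unfolding QQ'_def by auto
  qed
  then show ?thesis using Phi_QQ[OF YQ] unfolding QQ''_def by blast
qed

lemma Phi_c:
  assumes cz: "(X *v c)$z = 0" and c0: "X *v c \<noteq> 0"
  shows "(Phi z X *v (Sm z *v c))$z = 0 \<and> Phi z X *v (Sm z *v c) \<noteq> 0"
proof -
  define w where "w = X *v c"
  have eq: "Phi z X *v (Sm z *v c) = transpose (Sm z) *v w"
    by (simp add: Phi_def w_def matrix_vector_mul_assoc[symmetric] matrix_vector_mul_assoc[of "Sm z" "Sm z"] SS)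
  have "(transpose (Sm z) *v w)$z = axis z 1 \<bullet> (transpose (Sm z) *v w)" by (simp add: inner_axis')
  also have "\<dots> = (Sm z *v axis z 1) \<bullet> w" by (rule inner_transpose)
  also have "\<dots> = 0" using cz by (simp add: Smz inner_axis' w_def)
  finally have 1: "(Phi z X *v (Sm z *v c))$z = 0" using eq by simp
  have "transpose (Sm z) *v w \<noteq> 0"
  proof
    assume "transpose (Sm z) *v w = 0"
    then have "transpose (Sm z) *v (transpose (Sm z) *v w) = 0" by simp
    then have "w = 0" by (simp only: matrix_vector_mul_assoc SSt matrix_vector_mul_lid)
    then show False using c0 by (simp add: w_def)
  qed
  with 1 eq show ?thesis by simp
qed



lemma nonv:
  fixes X :: "real^'n^'n"
  assumes Cc: "C \<in> {QQ z, QQ' z, QQ'' z}" and XC: "X \<in> C" and nP: "\<not> Pz z X"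
  shows "\<not> is_vertex sym_mats C X"
proof -
  obtain c where cz: "(X *v c)$z = 0" and c0: "X *v c \<noteq> 0" using nP unfolding Pz_def by blast
  consider "C = QQ z" | "C = QQ' z" | "C = QQ'' z" using Cc by blast
  then show ?thesis
  proof cases
    case 1
    then have XQ: "X \<in> QQ z" using XC by simp
    obtain D W2 q \<epsilon> where "D \<in> sym_mats" "D \<noteq> 0" "\<epsilon> > 0" "q \<ge> 0"
      "\<forall>t. \<bar>t\<bar> < \<epsilon> \<longrightarrow> (1 / (1 + t^2 * q)) *\<^sub>R (X + t *\<^sub>R D + t^2 *\<^sub>R W2) \<in> QQ z"
      using core[OF XQ cz c0] by blast
    then show ?thesis using not_vertex[OF XC] 1 by blast
  next
    case 2
    then have XQ: "X \<in> QQ z" and X': "X \<in> QQ' z" using XC by (auto simp: QQ'_def)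
    obtain D W2 q \<epsilon> where "D \<in> sym_mats" "D \<noteq> 0" "\<epsilon> > 0" "q \<ge> 0"
      "\<forall>t. \<bar>t\<bar> < \<epsilon> \<longrightarrow> (1 / (1 + t^2 * q)) *\<^sub>R (X + t *\<^sub>R D + t^2 *\<^sub>R W2) \<in> QQ' z"
      using core[OF XQ cz c0] X' by blast
    then show ?thesis using not_vertex[OF XC] 2 by blast
  next
    case 3
    then have X'': "X \<in> QQ'' z" using XC by simp
    define Xt where "Xt = Phi z X"
    have XtQ': "Xt \<in> QQ' z" unfolding Xt_def by (rule Phi_QQ''[OF X''])
    then have XtQ: "Xt \<in> QQ z" by (simp add: QQ'_def)
    have cc: "(Xt *v (Sm z *v c))$z = 0" "Xt *v (Sm z *v c) \<noteq> 0"
      using Phi_c[OF cz c0] unfolding Xt_def by auto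
    obtain D W2 q \<epsilon> where Ds: "D \<in> sym_mats" and D0: "D \<noteq> 0" and e: "\<epsilon> > 0" and q: "q \<ge> 0"
      and H: "\<forall>t. \<bar>t\<bar> < \<epsilon> \<longrightarrow> (1 / (1 + t^2 * q)) *\<^sub>R (Xt + t *\<^sub>R D + t^2 *\<^sub>R W2) \<in> QQ' z"
      using core[OF XtQ cc] XtQ' by blast
    have PD: "Phi z D \<in> sym_mats" using Ds by (simp add: sym_mats_def Phi_transpose)
    have PD0: "Phi z D \<noteq> 0"
    proof
      assume h: "Phi z D = 0"
      have "D = Phi z (Phi z D)" by (simp only: PhiPhi)
      also have "\<dots> = Phi z 0" by (simp only: h)
      also have "\<dots> = 0" by (simp add: Phi_def)
      finally show False using D0 by simp
    qed
    have "(1 / (1 + t^2 * q)) *\<^sub>R (X + t *\<^sub>R Phi z D + t^2 *\<^sub>R Phi z W2) \<in> QQ'' z"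
      if t: "\<bar>t\<bar> < \<epsilon>" for t
    proof -
      have "Phi z ((1 / (1 + t^2 * q)) *\<^sub>R (Xt + t *\<^sub>R D + t^2 *\<^sub>R W2)) \<in> QQ'' z"
        using Phi_back H t by blast
      moreover have "Phi z ((1 / (1 + t^2 * q)) *\<^sub>R (Xt + t *\<^sub>R D + t^2 *\<^sub>R W2))
          = (1 / (1 + t^2 * q)) *\<^sub>R (X + t *\<^sub>R Phi z D + t^2 *\<^sub>R Phi z W2)"
        by (simp only: Phi_scale Phi_add Xt_def PhiPhi)
      ultimately show ?thesis by simp
    qed
    then show ?thesis using not_vertex[OF XC PD PD0 e q] 3 by blast
  qed
qed

theorem corollary3p3:
  fixes z :: "'n::finite" and C :: "(real^'n^'n) set"
  assumes "C \<in> {QQ z, QQ' z, QQ'' z}"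
  shows "(\<forall>X\<in>C. is_vertex sym_mats C X \<longleftrightarrow> rank X = 1) \<and>
         {X. is_vertex sym_mats C X} = {outer (lift_chi z S) | S. S \<subseteq> UNIV - {z}}"
proof -
  have CQ: "C \<subseteq> QQ z" using assms by (auto simp: QQ'_def QQ''_def)
  have outC: "outer (lift_chi z S) \<in> C" for S
    using assms outer_QQ outer_QQ' outer_QQ'' by blast
  have vP: "Pz z X" if "X \<in> C" "is_vertex sym_mats C X" for X
    using nonv[OF assms that(1)] that(2) by blast
  have zz: "X$z$z = 1" if "X \<in> C" for X using CQ that QQ_facts(2) by blast
  have part1: "\<forall>X\<in>C. is_vertex sym_mats C X \<longleftrightarrow> rank X = 1"
  proof
    fix X assume XC: "X \<in> C"
    show "is_vertex sym_mats C X \<longleftrightarrow> rank X = 1"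
    proof
      assume "is_vertex sym_mats C X"
      then show "rank X = 1" using vP[OF XC] rank1_iff[OF zz[OF XC]] by blast
    next
      assume "rank X = 1"
      then have "Pz z X" using rank1_iff[OF zz[OF XC]] by blast
      then obtain S where S: "S \<subseteq> UNIV - {z}" and X: "X = outer (lift_chi z S)"
        using P_outer XC CQ by blast
      show "is_vertex sym_mats C X" using vertex_outer2[OF CQ S] outC X by simp
    qed
  qed
  have part2: "{X. is_vertex sym_mats C X} = {outer (lift_chi z S) | S. S \<subseteq> UNIV - {z}}"
  proof
    show "{X. is_vertex sym_mats C X} \<subseteq> {outer (lift_chi z S) | S. S \<subseteq> UNIV - {z}}"
    proof
      fix X assume "X \<in> {X. is_vertex sym_mats C X}"
      then have v: "is_vertex sym_mats C X" by simp
      then have XC: "X \<in> C" by (simp add: is_vertex_def)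
      then show "X \<in> {outer (lift_chi z S) | S. S \<subseteq> UNIV - {z}}"
        using P_outer[of X z] vP[OF XC v] CQ by blast
    qed
    show "{outer (lift_chi z S) | S. S \<subseteq> UNIV - {z}} \<subseteq> {X. is_vertex sym_mats C X}"
      using vertex_outer2[OF CQ] outC by blast
  qed
  show ?thesis using part1 part2 by blast
qed


end
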